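(* Let $\mathfrak{h}\subset\mathrm{Mat}_{2n+2}(\mathbb{C})$ be a Lie subalgebra (for the commutator bracket) of strictly upper-triangular matrices isomorphic to the Heisenberg Lie algebra $\mathfrak{h}_{2n+1}$, let $t$ span its center, let $\mathfrak{m}$ be the associative subalgebra of $\mathrm{Mat}_{2n+2}(\mathbb{C})$ generated by $\mathfrak{h}$, and let $\mathcal{A}=\mathbb{C}I_{2n+2}\oplus\mathfrak{m}$. If $t\cdot\mathfrak{m}=\mathfrak{m}\cdot t=0$, then $\mathfrak{m}^2\subset C(\mathcal{A})$, the center of $\mathcal{A}$.
   Context: The Heisenberg Lie algebra $\mathfrak{h}_{2n+1}$ is $\mathbb{W}\times\mathbb{C}$, $\mathbb{W}$ a $2n$-dimensional complex vector space with non-degenerate skew-symmetric form $\omega$, with bracket $[(w_1,t_1),(w_2,t_2)]=(0,\omega(w_1,w_2))$; its center $[\mathfrak{h}_{2n+1},\mathfrak{h}_{2n+1}]$ is one-dimensional. $\mathfrak{m}^2$ denotes the span of products of two elements of $\mathfrak{m}$. *)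

theory Defs
  imports "Jordan_Normal_Form.Matrix"
begin

definition W_space :: "nat \<Rightarrow> (nat \<Rightarrow> complex) set" where
  "W_space n = {w. \<forall>i\<ge>2*n. w i = 0}"

definition symplectic_form :: "nat \<Rightarrow> ((nat \<Rightarrow> complex) \<Rightarrow> (nat \<Rightarrow> complex) \<Rightarrow> complex) \<Rightarrow> bool" where
  "symplectic_form n \<omega> \<longleftrightarrow>
     (\<forall>u\<in>W_space n. \<forall>v\<in>W_space n. \<forall>x\<in>W_space n. \<forall>a b.
        \<omega> (\<lambda>i. a * u i + b * v i) x = a * \<omega> u x + b * \<omega> v x) \<and>
     (\<forall>u\<in>W_space n. \<forall>v\<in>W_space n. \<omega> u v = - \<omega> v u) \<and>
     (\<forall>u\<in>W_space n. (\<forall>v\<in>W_space n. \<omega> u v = 0) \<longrightarrow> u = (\<lambda>_. 0))"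

definition heis_carrier :: "nat \<Rightarrow> ((nat \<Rightarrow> complex) \<times> complex) set" where
  "heis_carrier n = W_space n \<times> UNIV"

definition heis_lincomb :: "complex \<Rightarrow> (nat \<Rightarrow> complex) \<times> complex \<Rightarrow> complex \<Rightarrow> (nat \<Rightarrow> complex) \<times> complex
    \<Rightarrow> (nat \<Rightarrow> complex) \<times> complex" where
  "heis_lincomb a x b y = ((\<lambda>i. a * fst x i + b * fst y i), a * snd x + b * snd y)"

definition heis_bracket :: "((nat \<Rightarrow> complex) \<Rightarrow> (nat \<Rightarrow> complex) \<Rightarrow> complex) \<Rightarrow>
    (nat \<Rightarrow> complex) \<times> complex \<Rightarrow> (nat \<Rightarrow> complex) \<times> complex \<Rightarrow> (nat \<Rightarrow> complex) \<times> complex" where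
  "heis_bracket \<omega> x y = ((\<lambda>_. 0), \<omega> (fst x) (fst y))"

definition commutator :: "complex mat \<Rightarrow> complex mat \<Rightarrow> complex mat" where
  "commutator A B = A * B - B * A"

definition strictly_upper :: "nat \<Rightarrow> complex mat \<Rightarrow> bool" where
  "strictly_upper N A \<longleftrightarrow> A \<in> carrier_mat N N \<and> (\<forall>i<N. \<forall>j<N. j \<le> i \<longrightarrow> A $$ (i, j) = 0)"

definition heisenberg_subalgebra :: "nat \<Rightarrow> nat \<Rightarrow> complex mat set \<Rightarrow> bool" where
  "heisenberg_subalgebra n N h \<longleftrightarrow>
    (\<exists>\<omega> \<phi>. symplectic_form n \<omega> \<and>
       inj_on \<phi> (heis_carrier n) \<and> h = \<phi> ` heis_carrier n \<and>
       (\<forall>x\<in>heis_carrier n. strictly_upper N (\<phi> x)) \<and>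
       (\<forall>x\<in>heis_carrier n. \<forall>y\<in>heis_carrier n. \<forall>a b.
          \<phi> (heis_lincomb a x b y) = a \<cdot>\<^sub>m \<phi> x + b \<cdot>\<^sub>m \<phi> y) \<and>
       (\<forall>x\<in>heis_carrier n. \<forall>y\<in>heis_carrier n.
          \<phi> (heis_bracket \<omega> x y) = commutator (\<phi> x) (\<phi> y)))"

definition lie_center :: "complex mat set \<Rightarrow> complex mat set" where
  "lie_center h = {x\<in>h. \<forall>y\<in>h. commutator x y = 0\<^sub>m (dim_row x) (dim_col x)}"

inductive_set assoc_gen :: "nat \<Rightarrow> complex mat set \<Rightarrow> complex mat set" for N S where
  gen: "x \<in> S \<Longrightarrow> x \<in> assoc_gen N S"
| zero: "0\<^sub>m N N \<in> assoc_gen N S"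
| add: "x \<in> assoc_gen N S \<Longrightarrow> y \<in> assoc_gen N S \<Longrightarrow> x + y \<in> assoc_gen N S"
| smult: "x \<in> assoc_gen N S \<Longrightarrow> c \<cdot>\<^sub>m x \<in> assoc_gen N S"
| mult: "x \<in> assoc_gen N S \<Longrightarrow> y \<in> assoc_gen N S \<Longrightarrow> x * y \<in> assoc_gen N S"

inductive_set mat_span :: "nat \<Rightarrow> complex mat set \<Rightarrow> complex mat set" for N S where
  zero: "0\<^sub>m N N \<in> mat_span N S"
| step: "x \<in> S \<Longrightarrow> y \<in> mat_span N S \<Longrightarrow> c \<cdot>\<^sub>m x + y \<in> mat_span N S"

definition mat_square :: "nat \<Rightarrow> complex mat set \<Rightarrow> complex mat set" where
  "mat_square N m = mat_span N {x * y | x y. x \<in> m \<and> y \<in> m}"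

definition unitalize :: "nat \<Rightarrow> complex mat set \<Rightarrow> complex mat set" where
  "unitalize N m = {c \<cdot>\<^sub>m 1\<^sub>m N + x | c x. x \<in> m}"

definition assoc_center :: "complex mat set \<Rightarrow> complex mat set" where
  "assoc_center A = {z\<in>A. \<forall>a\<in>A. z * a = a * z}"

end

theory Submission
  imports Defs
begin

lemma mat_eq_of_minus0:
  fixes A B :: "complex mat"
  assumes "A \<in> carrier_mat N N" "B \<in> carrier_mat N N" "A - B = 0\<^sub>m N N"
  shows "A = B"
proof (rule eq_matI)
  fix i j assume ij: "i < dim_row B" "j < dim_col B"
  have "(A - B) $$ (i,j) = 0" using assms ij by simp
  moreover have "(A - B) $$ (i,j) = A $$ (i,j) - B $$ (i,j)" using assms(1,2) ij by simp
  ultimately show "A $$ (i,j) = B $$ (i,j)" by simp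
qed (use assms in auto)

lemma assoc_gen_carrier:
  assumes "x \<in> assoc_gen N S" "S \<subseteq> carrier_mat N N"
  shows "x \<in> carrier_mat N N"
  using assms by (induction rule: assoc_gen.induct) auto

definition QQ :: "nat \<Rightarrow> complex mat set \<Rightarrow> complex mat \<Rightarrow> complex mat \<Rightarrow> bool" where
  "QQ N S y z \<longleftrightarrow> (\<forall>x\<in>assoc_gen N S. x * (y * z) = x * (z * y) \<and> (y * z) * x = (z * y) * x)"

lemma QQ_sym: "QQ N S y z \<longleftrightarrow> QQ N S z y"
  unfolding QQ_def by auto

lemma QQ_ind:
  assumes y: "y \<in> assoc_gen N S" and S: "S \<subseteq> carrier_mat N N"
    and z: "z \<in> carrier_mat N N" and base: "\<forall>a\<in>S. QQ N S a z"
  shows "QQ N S y z"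
  using y
proof (induction rule: assoc_gen.induct)
  case (gen x)
  then show ?case using base by auto
next
  case zero
  show ?case unfolding QQ_def using z
    by (auto simp: left_mult_zero_mat right_mult_zero_mat)
next
  case (add y1 y2)
  have c1: "y1 \<in> carrier_mat N N" "y2 \<in> carrier_mat N N"
    using add.hyps assoc_gen_carrier S by auto
  have cc: "y1 * z \<in> carrier_mat N N" "y2 * z \<in> carrier_mat N N"
    "z * y1 \<in> carrier_mat N N" "z * y2 \<in> carrier_mat N N" using c1 z by auto
  show ?case unfolding QQ_def
  proof
    fix x assume x: "x \<in> assoc_gen N S"
    have cx: "x \<in> carrier_mat N N" using x assoc_gen_carrier S by auto
    have e1: "x * (y1 * z) = x * (z * y1)" "(y1 * z) * x = (z * y1) * x"
      using add.IH(1) x unfolding QQ_def by auto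
    have e2: "x * (y2 * z) = x * (z * y2)" "(y2 * z) * x = (z * y2) * x"
      using add.IH(2) x unfolding QQ_def by auto
    have "x * ((y1 + y2) * z) = x * (y1 * z + y2 * z)" using add_mult_distrib_mat[OF c1 z] by simp
    also have "\<dots> = x * (y1 * z) + x * (y2 * z)" by (rule mult_add_distrib_mat[OF cx cc(1,2)])
    also have "\<dots> = x * (z * y1) + x * (z * y2)" using e1 e2 by simp
    also have "\<dots> = x * (z * y1 + z * y2)" by (rule mult_add_distrib_mat[OF cx cc(3,4), symmetric])
    also have "\<dots> = x * (z * (y1 + y2))" using mult_add_distrib_mat[OF z c1] by simp
    finally have A: "x * ((y1 + y2) * z) = x * (z * (y1 + y2))" .
    have "((y1 + y2) * z) * x = (y1 * z + y2 * z) * x" using add_mult_distrib_mat[OF c1 z] by simp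
    also have "\<dots> = (y1 * z) * x + (y2 * z) * x" by (rule add_mult_distrib_mat[OF cc(1,2) cx])
    also have "\<dots> = (z * y1) * x + (z * y2) * x" using e1 e2 by simp
    also have "\<dots> = (z * y1 + z * y2) * x" by (rule add_mult_distrib_mat[OF cc(3,4) cx, symmetric])
    also have "\<dots> = (z * (y1 + y2)) * x" using mult_add_distrib_mat[OF z c1] by simp
    finally show "x * ((y1 + y2) * z) = x * (z * (y1 + y2)) \<and>
        (y1 + y2) * z * x = z * (y1 + y2) * x" using A by simp
  qed
next
  case (smult y1 c)
  have c1: "y1 \<in> carrier_mat N N"
    using smult.hyps assoc_gen_carrier S by auto
  have cc: "y1 * z \<in> carrier_mat N N" "z * y1 \<in> carrier_mat N N" using c1 z by auto
  show ?case unfolding QQ_def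
  proof
    fix x assume x: "x \<in> assoc_gen N S"
    have cx: "x \<in> carrier_mat N N" using x assoc_gen_carrier S by auto
    have e1: "x * (y1 * z) = x * (z * y1)" "(y1 * z) * x = (z * y1) * x"
      using smult.IH x unfolding QQ_def by auto
    have "x * ((c \<cdot>\<^sub>m y1) * z) = c \<cdot>\<^sub>m (x * (y1 * z))"
      using c1 cx z cc mult_smult_assoc_mat[OF c1 z] mult_smult_distrib[OF z c1]
        mult_smult_distrib[OF cx cc(1)] mult_smult_distrib[OF cx cc(2)]
        mult_smult_assoc_mat[OF cc(1) cx] mult_smult_assoc_mat[OF cc(2) cx] by simp
    moreover have "x * (z * (c \<cdot>\<^sub>m y1)) = c \<cdot>\<^sub>m (x * (z * y1))"
      using c1 cx z cc mult_smult_assoc_mat[OF c1 z] mult_smult_distrib[OF z c1]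
        mult_smult_distrib[OF cx cc(1)] mult_smult_distrib[OF cx cc(2)]
        mult_smult_assoc_mat[OF cc(1) cx] mult_smult_assoc_mat[OF cc(2) cx] by simp
    moreover have "((c \<cdot>\<^sub>m y1) * z) * x = c \<cdot>\<^sub>m ((y1 * z) * x)"
      using c1 cx z cc mult_smult_assoc_mat[OF c1 z] mult_smult_distrib[OF z c1]
        mult_smult_distrib[OF cx cc(1)] mult_smult_distrib[OF cx cc(2)]
        mult_smult_assoc_mat[OF cc(1) cx] mult_smult_assoc_mat[OF cc(2) cx] by simp
    moreover have "(z * (c \<cdot>\<^sub>m y1)) * x = c \<cdot>\<^sub>m ((z * y1) * x)"
      using c1 cx z cc mult_smult_assoc_mat[OF c1 z] mult_smult_distrib[OF z c1]
        mult_smult_distrib[OF cx cc(1)] mult_smult_distrib[OF cx cc(2)]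
        mult_smult_assoc_mat[OF cc(1) cx] mult_smult_assoc_mat[OF cc(2) cx] by simp
    ultimately show "x * ((c \<cdot>\<^sub>m y1) * z) = x * (z * (c \<cdot>\<^sub>m y1)) \<and>
        (c \<cdot>\<^sub>m y1) * z * x = z * (c \<cdot>\<^sub>m y1) * x" using e1 by simp
  qed
next
  case (mult y1 y2)
  have c1: "y1 \<in> carrier_mat N N" "y2 \<in> carrier_mat N N"
    using mult.hyps assoc_gen_carrier S by auto
  show ?case unfolding QQ_def
  proof
    fix x assume x: "x \<in> assoc_gen N S"
    have cx: "x \<in> carrier_mat N N" using x assoc_gen_carrier S by auto
    have xy1: "x * y1 \<in> assoc_gen N S" using x mult.hyps by (simp add: assoc_gen.mult)
    have y2x: "y2 * x \<in> assoc_gen N S" using x mult.hyps by (simp add: assoc_gen.mult)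
    have pc: "y2 * z \<in> carrier_mat N N" "z * y2 \<in> carrier_mat N N" "y1 * z \<in> carrier_mat N N"
      "z * y1 \<in> carrier_mat N N" "x * y1 \<in> carrier_mat N N" "y2 * x \<in> carrier_mat N N"
      "y1 * y2 \<in> carrier_mat N N" "x * z \<in> carrier_mat N N" "z * x \<in> carrier_mat N N"
      using c1 cx z by auto
    note AS = assoc_mult_mat[OF c1(1) c1(2) z] assoc_mult_mat[OF cx c1(1) pc(1)]
      assoc_mult_mat[OF cx c1(1) pc(2)] assoc_mult_mat[OF cx pc(3) c1(2)] assoc_mult_mat[OF c1(1) z c1(2)]
      assoc_mult_mat[OF cx pc(4) c1(2)] assoc_mult_mat[OF z c1(1) c1(2)]
      assoc_mult_mat[OF pc(7) z cx] assoc_mult_mat[OF c1(1) c1(2) pc(9)] assoc_mult_mat[OF c1(2) z cx]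
      assoc_mult_mat[OF z c1(2) cx] assoc_mult_mat[OF c1(1) z pc(6)]
      assoc_mult_mat[OF z c1(1) pc(6)] assoc_mult_mat[OF z pc(7) cx] assoc_mult_mat[OF c1(1) c1(2) cx]
      assoc_mult_mat[OF c1(1) pc(1) cx] assoc_mult_mat[OF c1(1) pc(2) cx] assoc_mult_mat[OF z pc(6) cx]
      assoc_mult_mat[OF pc(3) c1(2) cx] assoc_mult_mat[OF pc(4) c1(2) cx] assoc_mult_mat[OF z pc(1) cx]
    have a1: "(x * y1) * (y2 * z) = (x * y1) * (z * y2)"
      using mult.IH(2) xy1 unfolding QQ_def by auto
    have a2: "x * (y1 * z) = x * (z * y1)"
      using mult.IH(1) x unfolding QQ_def by auto
    have b1: "(y2 * z) * x = (z * y2) * x"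
      using mult.IH(2) x unfolding QQ_def by auto
    have b2: "(y1 * z) * (y2 * x) = (z * y1) * (y2 * x)"
      using mult.IH(1) y2x unfolding QQ_def by auto
    have "x * ((y1 * y2) * z) = (x * y1) * (y2 * z)" by (simp only: AS)
    also have "\<dots> = (x * y1) * (z * y2)" using a1 .
    also have "\<dots> = (x * (y1 * z)) * y2" by (simp only: AS)
    also have "\<dots> = (x * (z * y1)) * y2" using a2 by simp
    also have "\<dots> = x * (z * (y1 * y2))" by (simp only: AS)
    finally have A: "x * ((y1 * y2) * z) = x * (z * (y1 * y2))" .
    have "((y1 * y2) * z) * x = y1 * ((y2 * z) * x)" by (simp only: AS)
    also have "\<dots> = y1 * ((z * y2) * x)" using b1 by simp
    also have "\<dots> = (y1 * z) * (y2 * x)" by (simp only: AS)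
    also have "\<dots> = (z * y1) * (y2 * x)" using b2 .
    also have "\<dots> = (z * (y1 * y2)) * x" by (simp only: AS)
    finally show "x * ((y1 * y2) * z) = x * (z * (y1 * y2)) \<and>
        (y1 * y2) * z * x = z * (y1 * y2) * x" using A by simp
  qed
qed

lemma QQ_all:
  assumes S: "S \<subseteq> carrier_mat N N" and base: "\<forall>a\<in>S. \<forall>b\<in>S. QQ N S a b"
    and y: "y \<in> assoc_gen N S" and z: "z \<in> assoc_gen N S"
  shows "QQ N S y z"
proof -
  have za: "\<forall>a\<in>S. QQ N S a z'" if z': "z' \<in> assoc_gen N S" for z'
  proof
    fix a assume a: "a \<in> S"
    have "QQ N S z' a"
      by (rule QQ_ind[OF z' S]) (use a S base QQ_sym in auto)
    thus "QQ N S a z'" using QQ_sym by auto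
  qed
  show ?thesis
    by (rule QQ_ind[OF y S]) (use z assoc_gen_carrier[OF z S] za[OF z] in auto)
qed

theorem lemma3p3:
  fixes n :: nat and h :: "complex mat set" and t :: "complex mat"
  assumes "heisenberg_subalgebra n (2*n+2) h"
    and "t \<in> h" and "lie_center h = {c \<cdot>\<^sub>m t | c. True}"
    and "\<forall>x\<in>assoc_gen (2*n+2) h. t * x = 0\<^sub>m (2*n+2) (2*n+2) \<and> x * t = 0\<^sub>m (2*n+2) (2*n+2)"
  shows "mat_square (2*n+2) (assoc_gen (2*n+2) h)
           \<subseteq> assoc_center (unitalize (2*n+2) (assoc_gen (2*n+2) h))"
proof -
  define N where "N = 2*n+2"
  obtain \<omega> \<phi> where sf: "symplectic_form n \<omega>" and hdef: "h = \<phi> ` heis_carrier n"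
    and su: "\<forall>x\<in>heis_carrier n. strictly_upper N (\<phi> x)"
    and lin: "\<forall>x\<in>heis_carrier n. \<forall>y\<in>heis_carrier n. \<forall>a b.
          \<phi> (heis_lincomb a x b y) = a \<cdot>\<^sub>m \<phi> x + b \<cdot>\<^sub>m \<phi> y"
    and br: "\<forall>x\<in>heis_carrier n. \<forall>y\<in>heis_carrier n.
          \<phi> (heis_bracket \<omega> x y) = commutator (\<phi> x) (\<phi> y)"
    using assms(1) unfolding heisenberg_subalgebra_def N_def by blast
  have hc: "h \<subseteq> carrier_mat N N" using su hdef unfolding strictly_upper_def by auto
  have tc: "t \<in> carrier_mat N N" using hc assms(2) by auto
  have tz: "\<forall>x\<in>assoc_gen N h. t * x = 0\<^sub>m N N \<and> x * t = 0\<^sub>m N N"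
    using assms(4) unfolding N_def by simp
  have z0: "(\<lambda>_. 0::complex) \<in> W_space n" unfolding W_space_def by simp
  have om0: "\<omega> (\<lambda>_. 0) v = 0" if "v \<in> W_space n" for v
  proof -
    have L: "\<forall>u\<in>W_space n. \<forall>v\<in>W_space n. \<forall>x\<in>W_space n. \<forall>a b.
        \<omega> (\<lambda>i. a * u i + b * v i) x = a * \<omega> u x + b * \<omega> v x"
      using sf unfolding symplectic_form_def by blast
    show ?thesis using L[rule_format, OF z0 z0 that, of 0 0] by simp
  qed
  have comm: "\<exists>c. commutator a b = c \<cdot>\<^sub>m t" if a: "a \<in> h" and b: "b \<in> h" for a b
  proof -
    obtain u v where u: "u \<in> heis_carrier n" and v: "v \<in> heis_carrier n"
      and au: "a = \<phi> u" and bv: "b = \<phi> v" using a b hdef by auto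
    define k where "k = heis_bracket \<omega> u v"
    have k: "k \<in> heis_carrier n" unfolding k_def heis_bracket_def heis_carrier_def using z0 by simp
    have ck: "\<phi> k \<in> carrier_mat N N" using k su unfolding strictly_upper_def by auto
    have "\<phi> k \<in> lie_center h"
      unfolding lie_center_def
    proof (intro CollectI conjI ballI)
      show "\<phi> k \<in> h" using k hdef by auto
      fix y assume "y \<in> h"
      then obtain w where w: "w \<in> heis_carrier n" and yw: "y = \<phi> w" using hdef by auto
      have fw: "fst w \<in> W_space n" using w unfolding heis_carrier_def by auto
      have "commutator (\<phi> k) y = \<phi> (heis_bracket \<omega> k w)" using br k w yw by simp
      also have "heis_bracket \<omega> k w = heis_lincomb 0 w 0 w"
        unfolding heis_bracket_def heis_lincomb_def k_def using om0[OF fw] by simp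
      also have "\<phi> (heis_lincomb 0 w 0 w) = 0 \<cdot>\<^sub>m \<phi> w + 0 \<cdot>\<^sub>m \<phi> w" using lin w by blast
      also have "\<dots> = 0\<^sub>m N N"
        using su w unfolding strictly_upper_def by (intro eq_matI) auto
      finally show "commutator (\<phi> k) y = 0\<^sub>m (dim_row (\<phi> k)) (dim_col (\<phi> k))"
        using ck by simp
    qed
    then have "\<phi> k \<in> {c \<cdot>\<^sub>m t | c. True}" using assms(3) by simp
    moreover have "commutator a b = \<phi> k" using br u v au bv k_def by simp
    ultimately show ?thesis by auto
  qed
  have base: "\<forall>a\<in>h. \<forall>b\<in>h. QQ N h a b"
  proof (intro ballI)
    fix a b assume a: "a \<in> h" and b: "b \<in> h"
    obtain c where c: "a * b - b * a = c \<cdot>\<^sub>m t" using comm[OF a b] unfolding commutator_def by auto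
    have ca: "a \<in> carrier_mat N N" and cb: "b \<in> carrier_mat N N" using a b hc by auto
    show "QQ N h a b" unfolding QQ_def
    proof
      fix x assume x: "x \<in> assoc_gen N h"
      have cx: "x \<in> carrier_mat N N" using assoc_gen_carrier[OF x hc] .
      have "x * (a * b) - x * (b * a) = x * (a * b - b * a)"
        by (rule mult_minus_distrib_mat[OF cx mult_carrier_mat[OF ca cb] mult_carrier_mat[OF cb ca], symmetric])
      also have "\<dots> = x * (c \<cdot>\<^sub>m t)" using c by simp
      also have "\<dots> = c \<cdot>\<^sub>m (x * t)" by (rule mult_smult_distrib[OF cx tc])
      also have "x * t = 0\<^sub>m N N" using tz x by blast
      also have "c \<cdot>\<^sub>m 0\<^sub>m N N = (0\<^sub>m N N :: complex mat)" by (rule smult_zero_mat)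
      finally have 1: "x * (a * b) = x * (b * a)"
        by (rule mat_eq_of_minus0[OF mult_carrier_mat[OF cx mult_carrier_mat[OF ca cb]] mult_carrier_mat[OF cx mult_carrier_mat[OF cb ca]]])
      have "(a * b) * x - (b * a) * x = (a * b - b * a) * x"
        by (rule minus_mult_distrib_mat[OF mult_carrier_mat[OF ca cb] mult_carrier_mat[OF cb ca] cx, symmetric])
      also have "\<dots> = (c \<cdot>\<^sub>m t) * x" using c by simp
      also have "\<dots> = c \<cdot>\<^sub>m (t * x)" by (rule mult_smult_assoc_mat[OF tc cx])
      also have "t * x = 0\<^sub>m N N" using tz x by blast
      also have "c \<cdot>\<^sub>m 0\<^sub>m N N = (0\<^sub>m N N :: complex mat)" by (rule smult_zero_mat)
      finally have 2: "(a * b) * x = (b * a) * x"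
        by (rule mat_eq_of_minus0[OF mult_carrier_mat[OF mult_carrier_mat[OF ca cb] cx] mult_carrier_mat[OF mult_carrier_mat[OF cb ca] cx]])
      show "x * (a * b) = x * (b * a) \<and> a * b * x = b * a * x" using 1 2 by simp
    qed
  qed
  let ?m = "assoc_gen N h"
  have key: "p \<in> ?m \<and> (\<forall>w\<in>?m. p * w = w * p)" if p: "p \<in> mat_span N {x * y | x y. x \<in> ?m \<and> y \<in> ?m}" for p
    using p
  proof (induction rule: mat_span.induct)
    case zero
    have "0\<^sub>m N N * w = w * 0\<^sub>m N N" if "w \<in> ?m" for w
      using assoc_gen_carrier[OF that hc] left_mult_zero_mat right_mult_zero_mat by metis
    then show ?case by (auto intro: assoc_gen.zero)
  next
    case (step q p' c)
    then obtain x y where xy: "q = x * y" "x \<in> ?m" "y \<in> ?m" by auto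
    have cx: "x \<in> carrier_mat N N" "y \<in> carrier_mat N N" using xy assoc_gen_carrier[OF _ hc] by auto
    have cp: "p' \<in> carrier_mat N N" using step.IH assoc_gen_carrier[OF _ hc] by auto
    have pm: "p' \<in> ?m" using step.IH by blast
    have "c \<cdot>\<^sub>m q + p' \<in> ?m" unfolding xy(1)
      by (rule assoc_gen.add[OF assoc_gen.smult[OF assoc_gen.mult[OF xy(2) xy(3)]] pm])
    moreover have "(c \<cdot>\<^sub>m q + p') * w = w * (c \<cdot>\<^sub>m q + p')" if w: "w \<in> ?m" for w
    proof -
      have cw: "w \<in> carrier_mat N N" using w assoc_gen_carrier[OF _ hc] by auto
      have q1: "x * (y * w) = x * (w * y)" using QQ_all[OF hc base xy(3) w] xy(2) unfolding QQ_def by auto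
      have q2: "(x * w) * y = (w * x) * y" using QQ_all[OF hc base xy(2) w] xy(3) unfolding QQ_def by auto
      have "(x * y) * w = x * (y * w)" by (rule assoc_mult_mat[OF cx(1) cx(2) cw])
      also have "\<dots> = x * (w * y)" by (rule q1)
      also have "\<dots> = (x * w) * y" by (rule assoc_mult_mat[OF cx(1) cw cx(2), symmetric])
      also have "\<dots> = (w * x) * y" by (rule q2)
      also have "\<dots> = w * (x * y)" by (rule assoc_mult_mat[OF cw cx(1) cx(2)])
      finally have qw: "q * w = w * q" using xy(1) by simp
      have cq: "q \<in> carrier_mat N N" using cx xy(1) by simp
      have pw: "p' * w = w * p'" using step.IH w by auto
      have "(c \<cdot>\<^sub>m q + p') * w = c \<cdot>\<^sub>m (q * w) + p' * w"
        using add_mult_distrib_mat[OF smult_carrier_mat[OF cq] cp cw] mult_smult_assoc_mat[OF cq cw] by simp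
      also have "\<dots> = c \<cdot>\<^sub>m (w * q) + w * p'" using qw pw by simp
      also have "\<dots> = w * (c \<cdot>\<^sub>m q + p')"
        using mult_add_distrib_mat[OF cw smult_carrier_mat[OF cq] cp] mult_smult_distrib[OF cw cq] by simp
      finally show ?thesis .
    qed
    ultimately show ?case by blast
  qed
  show ?thesis unfolding N_def[symmetric]
  proof
    fix p assume "p \<in> mat_square N ?m"
    then have kp0: "p \<in> ?m \<and> (\<forall>w\<in>?m. p * w = w * p)" using key unfolding mat_square_def by blast
    have kp: "p \<in> ?m" "\<forall>w\<in>?m. p * w = w * p" using kp0 by blast+
    have cp: "p \<in> carrier_mat N N" using assoc_gen_carrier[OF kp(1) hc] .
    have "0 \<cdot>\<^sub>m 1\<^sub>m N + p = p"
    proof (rule eq_matI)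
      fix i j assume "i < dim_row p" "j < dim_col p"
      then show "(0 \<cdot>\<^sub>m 1\<^sub>m N + p) $$ (i, j) = p $$ (i, j)" using cp by simp
    qed (use cp in auto)
    then have "p = 0 \<cdot>\<^sub>m 1\<^sub>m N + p" by simp
    then have pu: "p \<in> unitalize N ?m" using kp(1) unfolding unitalize_def by blast
    have "p * a = a * p" if ua: "a \<in> unitalize N ?m" for a
    proof -
      obtain c x where a: "a = c \<cdot>\<^sub>m 1\<^sub>m N + x" and x: "x \<in> ?m" using ua unfolding unitalize_def by blast
      have cx: "x \<in> carrier_mat N N" using x assoc_gen_carrier[OF _ hc] by auto
      have "p * a = c \<cdot>\<^sub>m p + p * x"
        using a mult_add_distrib_mat[OF cp smult_carrier_mat[OF one_carrier_mat] cx]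
          mult_smult_distrib[OF cp one_carrier_mat] right_mult_one_mat[OF cp] by simp
      also have "p * x = x * p" using kp(2) x by blast
      also have "c \<cdot>\<^sub>m p + x * p = a * p"
        using a add_mult_distrib_mat[OF smult_carrier_mat[OF one_carrier_mat] cx cp]
          mult_smult_assoc_mat[OF one_carrier_mat cp] left_mult_one_mat[OF cp] by simp
      finally show ?thesis .
    qed
    then show "p \<in> assoc_center (unitalize N ?m)" using pu unfolding assoc_center_def by blast
  qed
qed

end
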